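(* Let $A\in\mathbb{R}^{l\times m}$ and $B\in\mathbb{R}^{n\times m}$, and consider the parametrized system $A\,(c\circ x^B)=0$ with parameters $c\in\mathbb{R}^m_{>0}$. Assume $\ker A\cap\mathbb{R}^m_{>0}\neq\emptyset$, that the coefficient polytope $P$ is one-dimensional ($\dim P=1$), and that the monomial dependency is one ($d=1$). Let $\omega$, $\tilde b\in\mathbb{R}^\omega$ be as defined in the context. If $$\sum_{i'=1}^{i}\tilde b_{i'}\ge 0\ \text{ for all } i=1,\dots,\omega-1 \quad(\text{or } \textstyle\sum_{i'=1}^{i}\tilde b_{i'}\le 0 \text{ for all } i=1,\dots,\omega-1)$$ and $\tilde b_1\cdot\tilde b_\omega<0$, then $|Y_c|=1$ for all $c\in\mathbb{R}^m_{>0}$.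
   Context: Notation: for $x\in\mathbb{R}^n_{>0}$ and $y\in\mathbb{R}^n$, $x^y=\prod_{i=1}^n x_i^{y_i}$; for a matrix $B=(b^1,\dots,b^m)\in\mathbb{R}^{n\times m}$, $x^B\in\mathbb{R}^m_{>0}$ is the vector with entries $x^{b^j}$; $\circ$ denotes the componentwise product, and $(\cdot)^{-1}$ applied to a positive vector is componentwise. $1_m\in\mathbb{R}^m$ is the all-ones vector. (One class setting.) The coefficient polytope is $P=\{y\in\ker A\cap\mathbb{R}^m_{>0} : 1_m\cdot y=1\}$. The monomial dependency subspace is $D=\ker\begin{pmatrix}B\\ 1_m^{\mathsf T}\end{pmatrix}\subseteq\mathbb{R}^m$ and the monomial dependency is $d=\dim D$. The solution set on the coefficient polytope is $Y_c=\{y\in P : y^z=c^z \text{ for all } z\in D\}$. When $\dim P=1$, the closure $\overline P=\{y\in\ker A\cap\mathbb{R}^m_{\ge0}: 1_m\cdot y=1\}$ is a line segment with two endpoints $y^1,y^2$; set $q=(y^1-y^2)\circ(y^1+y^2)^{-1}\in\mathbb{R}^m$, and assume (after reordering the indices $\{1,\dots,m\}$) that $1=q_1\ge q_2\ge\cdots\ge q_m=-1$. Let $I_1,\dots,I_\omega\subseteq\{1,\dots,m\}$ be the $\omega$ equivalence classes of indices with equal (consecutive) components of $q$, ordered so that the common value $\tilde q_i$ of $q$ on $I_i$ is strictly decreasing in $i$. When $d=1$, let $b\in\mathbb{R}^m$ span $D$, and define the lumped vector $\tilde b\in\mathbb{R}^\omega$ by $\tilde b_i=\sum_{i'\in I_i}b_{i'}$.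 *)

theory Defs
  imports "HOL-Analysis.Analysis"
begin

text \<open>Vectors in R^m are modelled as real^'m for a finite index type 'm (m = CARD('m)).
  A is an l x m matrix (real^'m^'l), B is an n x m matrix (real^'m^'n).\<close>

definition kerA :: "real^'m^'l \<Rightarrow> (real^'m) set" where
  "kerA A = {y. A *v y = 0}"

definition pos_vec :: "real^'m \<Rightarrow> bool" where
  "pos_vec y \<longleftrightarrow> (\<forall>j. y $ j > 0)"

definition nonneg_vec :: "real^'m \<Rightarrow> bool" where
  "nonneg_vec y \<longleftrightarrow> (\<forall>j. y $ j \<ge> 0)"

definition coeff_polytope :: "real^'m^'l \<Rightarrow> (real^'m) set" where
  "coeff_polytope A = {y. y \<in> kerA A \<and> pos_vec y \<and> (\<Sum>j\<in>UNIV. y $ j) = 1}"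

definition coeff_polytope_closure :: "real^'m^'l \<Rightarrow> (real^'m) set" where
  "coeff_polytope_closure A = {y. y \<in> kerA A \<and> nonneg_vec y \<and> (\<Sum>j\<in>UNIV. y $ j) = 1}"

definition mon_dep_space :: "real^'m^'n \<Rightarrow> (real^'m) set" where
  "mon_dep_space B = {z. B *v z = 0 \<and> (\<Sum>j\<in>UNIV. z $ j) = 0}"

definition vpow :: "real^'m \<Rightarrow> real^'m \<Rightarrow> real" where
  "vpow x y = (\<Prod>j\<in>UNIV. (x $ j) powr (y $ j))"

definition Ysol :: "real^'m^'l \<Rightarrow> real^'m^'n \<Rightarrow> real^'m \<Rightarrow> (real^'m) set" where
  "Ysol A B c = {y \<in> coeff_polytope A. \<forall>z\<in>mon_dep_space B. vpow y z = vpow c z}"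

definition qvec :: "real^'m \<Rightarrow> real^'m \<Rightarrow> real^'m" where
  "qvec y1 y2 = (\<chi> j. (y1 $ j - y2 $ j) / (y1 $ j + y2 $ j))"

definition n_classes :: "real^'m \<Rightarrow> nat" where
  "n_classes q = card (range (\<lambda>j. q $ j))"

text \<open>Common value of q on the i-th class (0-based), strictly decreasing in i.\<close>
definition class_val :: "real^'m \<Rightarrow> nat \<Rightarrow> real" where
  "class_val q i = rev (sorted_list_of_set (range (\<lambda>j. q $ j))) ! i"

definition eq_class :: "real^'m \<Rightarrow> nat \<Rightarrow> 'm set" where
  "eq_class q i = {j. q $ j = class_val q i}"

definition lumped :: "real^'m \<Rightarrow> real^'m \<Rightarrow> nat \<Rightarrow> real" where
  "lumped q b i = (\<Sum>j\<in>eq_class q i. b $ j)"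

end

theory Submission
  imports Defs "HOL-Real_Asymp.Real_Asymp"
begin


lemma abel_sum:
  fixes c a :: "nat \<Rightarrow> real"
  shows "(\<Sum>k<Suc n. c k * a k) = (\<Sum>k<n. (\<Sum>i\<le>k. a i) * (c k - c (Suc k))) + (\<Sum>i\<le>n. a i) * c n"
proof (induction n)
  case 0 then show ?case by simp
next
  case (Suc n)
  have "(\<Sum>k<Suc (Suc n). c k * a k) = (\<Sum>k<Suc n. c k * a k) + c (Suc n) * a (Suc n)" by simp
  also have "\<dots> = (\<Sum>k<n. (\<Sum>i\<le>k. a i) * (c k - c (Suc k))) + (\<Sum>i\<le>n. a i) * c n + c (Suc n) * a (Suc n)"
    using Suc by simp
  also have "\<dots> = (\<Sum>k<Suc n. (\<Sum>i\<le>k. a i) * (c k - c (Suc k))) + (\<Sum>i\<le>Suc n. a i) * c (Suc n)"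
    by (simp add: algebra_simps)
  finally show ?case .
qed

lemma classes_facts:
  fixes q :: "real^'m"
  defines "L \<equiv> rev (sorted_list_of_set (range (\<lambda>j. q $ j)))"
  shows "length L = n_classes q" "distinct L" "set L = range (\<lambda>j. q $ j)"
    "\<And>k. class_val q k = L ! k"
    "\<And>i k. i < k \<Longrightarrow> k < n_classes q \<Longrightarrow> L ! k < L ! i"
proof -
  show "length L = n_classes q" unfolding L_def n_classes_def by simp
  show "distinct L" unfolding L_def by simp
  show "set L = range (\<lambda>j. q $ j)" unfolding L_def by simp
  show "\<And>k. class_val q k = L ! k" unfolding L_def class_val_def by simp
  have s: "sorted_wrt (>) L" unfolding L_def sorted_wrt_rev
    using strict_sorted_list_of_set by simp
  show "\<And>i k. i < k \<Longrightarrow> k < n_classes q \<Longrightarrow> L ! k < L ! i"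
    using sorted_wrt_nth_less[OF s] \<open>length L = n_classes q\<close> by auto
qed

lemma group_sum:
  fixes q b :: "real^'m" and \<phi> :: "real \<Rightarrow> real"
  shows "(\<Sum>j\<in>UNIV. b$j * \<phi> (q$j)) = (\<Sum>k<n_classes q. \<phi> (class_val q k) * lumped q b k)"
proof -
  define L where "L = rev (sorted_list_of_set (range (\<lambda>j. q $ j)))"
  note F = classes_facts[where q=q, folded L_def]
  have "(\<Sum>j\<in>UNIV. b$j * \<phi> (q$j)) = (\<Sum>v\<in>range (\<lambda>j. q $ j). sum (\<lambda>j. b$j * \<phi> (q$j)) {j\<in>UNIV. q$j = v})"
    by (rule sum.group[symmetric]) auto
  also have "\<dots> = (\<Sum>v\<in>range (\<lambda>j. q $ j). \<phi> v * sum (\<lambda>j. b$j) {j. q$j = v})"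
    by (rule sum.cong) (auto simp: sum_distrib_left mult.commute intro!: sum.cong)
  also have "\<dots> = (\<Sum>k<n_classes q. \<phi> (L!k) * sum (\<lambda>j. b$j) {j. q$j = L!k})"
    using sum.reindex_bij_betw[OF bij_betw_nth[OF F(2) refl refl], of "\<lambda>v. \<phi> v * sum (\<lambda>j. b$j) {j. q$j = v}"]
    F(1,3) by simp
  finally show ?thesis by (simp add: lumped_def eq_class_def F(4))
qed

lemma abel_core:
  fixes q b :: "real^'m" and \<phi> :: "real \<Rightarrow> real"
  assumes S: "\<forall>i < n_classes q - 1. (\<Sum>i'\<le>i. lumped q b i') \<ge> 0"
    and a0: "lumped q b 0 > 0"
    and sb: "(\<Sum>j\<in>UNIV. b$j) = 0"
    and mono: "\<And>u v. u \<in> range (\<lambda>j. q$j) \<Longrightarrow> v \<in> range (\<lambda>j. q$j) \<Longrightarrow> u < v \<Longrightarrow> \<phi> u < \<phi> v"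
    and w2: "n_classes q \<ge> 2"
  shows "(\<Sum>j\<in>UNIV. b$j * \<phi> (q$j)) > 0"
proof -
  define L where "L = rev (sorted_list_of_set (range (\<lambda>j. q $ j)))"
  note F = classes_facts[where q=q, folded L_def]
  define \<omega> where "\<omega> = n_classes q"
  define a where "a = lumped q b"
  define c where "c = (\<lambda>k. \<phi> (L!k))"
  have inL: "\<And>k. k < \<omega> \<Longrightarrow> L!k \<in> range (\<lambda>j. q$j)"
    using F(1,3) \<omega>_def nth_mem by metis
  have tot: "(\<Sum>k<\<omega>. a k) = 0"
    using group_sum[of b "\<lambda>_. 1" q] sb by (simp add: a_def \<omega>_def)
  have om: "\<omega> = Suc (\<omega> - 1)" using w2 \<omega>_def by simp
  have "(\<Sum>j\<in>UNIV. b$j * \<phi> (q$j)) = (\<Sum>k<Suc (\<omega>-1). c k * a k)"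
    using group_sum[of b \<phi> q] om by (simp add: a_def c_def \<omega>_def F(4))
  also have "\<dots> = (\<Sum>k<\<omega>-1. (\<Sum>i\<le>k. a i) * (c k - c (Suc k))) + (\<Sum>i\<le>\<omega>-1. a i) * c (\<omega>-1)"
    by (rule abel_sum)
  also have "(\<Sum>i\<le>\<omega>-1. a i) = (\<Sum>k<\<omega>. a k)"
    using om by (metis lessThan_Suc_atMost)
  finally have eq: "(\<Sum>j\<in>UNIV. b$j * \<phi> (q$j)) = (\<Sum>k<\<omega>-1. (\<Sum>i\<le>k. a i) * (c k - c (Suc k))) + (\<Sum>k<\<omega>. a k) * c (\<omega>-1)" .
  have "(\<Sum>k<\<omega>-1. (\<Sum>i\<le>k. a i) * (c k - c (Suc k))) > 0"
  proof (rule sum_pos2[where i=0])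
    show "0 \<in> {..<\<omega>-1}" using w2 \<omega>_def by simp
    have "c 0 > c 1" unfolding c_def
      using mono[OF inL inL F(5)[of 0 1]] w2 \<omega>_def by simp
    then show "0 < (\<Sum>i\<le>0. a i) * (c 0 - c (Suc 0))" using a0 by (simp add: a_def)
    fix k assume k: "k \<in> {..<\<omega>-1}"
    have "c k > c (Suc k)" unfolding c_def
      using mono[OF inL inL F(5)[of k "Suc k"]] k \<omega>_def by simp
    moreover have "(\<Sum>i\<le>k. a i) \<ge> 0" using S k by (simp add: a_def \<omega>_def)
    ultimately show "0 \<le> (\<Sum>i\<le>k. a i) * (c k - c (Suc k))" by simp
  qed simp
  then show ?thesis using tot eq by simp
qed



lemma closure_mem:
  "y \<in> coeff_polytope_closure A \<longleftrightarrow> A *v y = 0 \<and> (\<forall>j. y$j \<ge> 0) \<and> (\<Sum>j\<in>UNIV. y $ j) = 1"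
  by (simp add: coeff_polytope_closure_def kerA_def nonneg_vec_def)

lemma endpoint_zero:
  fixes A :: "real^'m^'l" and y1 y2 :: "real^'m"
  assumes cl: "coeff_polytope_closure A = closed_segment y1 y2" and ne: "y1 \<noteq> y2"
  shows "\<exists>j. y2$j = 0"
proof (rule ccontr)
  assume nz: "\<not> (\<exists>j. y2$j = 0)"
  have y1c: "y1 \<in> coeff_polytope_closure A" and y2c: "y2 \<in> coeff_polytope_closure A"
    using cl by auto
  then have nn2: "\<forall>j. y2$j > 0" using nz by (simp add: closure_mem less_le)
  define \<epsilon> where "\<epsilon> = Min (range (\<lambda>j. y2$j))"
  have epos: "\<epsilon> > 0" unfolding \<epsilon>_def using nn2 by (subst Min_gr_iff) auto
  have ele: "\<And>j. \<epsilon> \<le> y2$j" unfolding \<epsilon>_def by (rule Min_le) auto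
  have y1le: "\<And>j. y1$j \<le> 1"
  proof -
    fix j
    have "y1$j \<le> (\<Sum>i\<in>UNIV. y1$i)" by (rule member_le_sum) (use y1c in \<open>auto simp: closure_mem\<close>)
    then show "y1$j \<le> 1" using y1c by (simp add: closure_mem)
  qed
  define z where "z = (1+\<epsilon>) *\<^sub>R y2 - \<epsilon> *\<^sub>R y1"
  have "z \<in> coeff_polytope_closure A"
    unfolding closure_mem
  proof (intro conjI allI)
    show "A *v z = 0" using y1c y2c
      by (simp add: z_def closure_mem matrix_vector_mult_diff_distrib matrix_vector_mult_scaleR)
    fix j
    have "\<epsilon> * y1$j \<le> \<epsilon> * 1" using y1le[of j] epos by (intro mult_left_mono) auto
    moreover have "\<epsilon> * y2$j \<ge> 0" using nn2 epos by (simp add: less_imp_le)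
    ultimately show "0 \<le> z$j" using ele[of j]
      by (simp add: z_def algebra_simps)
  next
    have "(\<Sum>j\<in>UNIV. z$j) = (1+\<epsilon>) * (\<Sum>j\<in>UNIV. y2$j) - \<epsilon> * (\<Sum>j\<in>UNIV. y1$j)"
      by (simp add: z_def sum_subtractf sum_distrib_left)
    then show "(\<Sum>j\<in>UNIV. z$j) = 1" using y1c y2c by (simp add: closure_mem)
  qed
  then have "z \<in> closed_segment y1 y2" using cl by simp
  then obtain u where u: "0 \<le> u" "u \<le> 1" "z = (1-u) *\<^sub>R y1 + u *\<^sub>R y2"
    unfolding closed_segment_def by auto
  have "(1+\<epsilon>-u) *\<^sub>R (y2 - y1) = z - ((1-u) *\<^sub>R y1 + u *\<^sub>R y2)"
    by (simp add: z_def algebra_simps)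
  also have "\<dots> = 0" using u by simp
  finally have "(1+\<epsilon>-u) *\<^sub>R (y2 - y1) = 0" .
  moreover have "1+\<epsilon>-u \<noteq> 0" using u epos by simp
  ultimately show False using ne by simp
qed

lemma pos_one: "\<bar>s::real\<bar> < 1 \<Longrightarrow> \<bar>u\<bar> \<le> 1 \<Longrightarrow> 1 + s* u > 0"
proof -
  assume a: "\<bar>s\<bar> < 1" "\<bar>u\<bar> \<le> 1"
  have "\<bar>s* u\<bar> \<le> \<bar>s\<bar>" using a by (simp add: abs_mult mult_left_le)
  then show ?thesis using a by linarith
qed

lemma phi_mono:
  fixes s s' u v :: real
  assumes "-1 < s" "s < s'" "s' < 1" "\<bar>u\<bar> \<le> 1" "\<bar>v\<bar> \<le> 1" "u < v"
  shows "ln (1+s'* u) - ln (1+s* u) < ln (1+s'* v) - ln (1+s* v)"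
proof -
  have p: "1+s'* u > 0" "1+s* u > 0" "1+s'* v > 0" "1+s* v > 0"
    using assms by (auto intro!: pos_one)
  have "(1+s'* u)*(1+s* v) < (1+s'* v)*(1+s* u)"
  proof -
    have "(1+s'* v)*(1+s* u) - (1+s'* u)*(1+s* v) = (s'-s)*(v-u)" by (simp add: algebra_simps)
    moreover have "(s'-s)*(v-u) > 0" using assms by simp
    ultimately show ?thesis by linarith
  qed
  then have "ln ((1+s'* u)*(1+s* v)) < ln ((1+s'* v)*(1+s* u))"
    using p by simp
  then show ?thesis using p by (simp add: ln_mult)
qed



lemma class_val_ext:
  fixes q :: "real^'m"
  assumes v: "v \<in> range (\<lambda>j. q$j)"
  shows "v \<le> class_val q 0" "class_val q (n_classes q - 1) \<le> v"
    "\<And>k. k < n_classes q \<Longrightarrow> class_val q k \<in> range (\<lambda>j. q$j)"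
proof -
  define L where "L = rev (sorted_list_of_set (range (\<lambda>j. q $ j)))"
  note F = classes_facts[where q=q, folded L_def]
  obtain k where k: "k < length L" "L!k = v" using v F(3) by (metis in_set_conv_nth)
  show "v \<le> class_val q 0" using k F(5)[of 0 k] F(1,4) by (cases "k = 0") auto
  have "k < n_classes q - 1 \<or> k = n_classes q - 1" using k F(1) by arith
  then show "class_val q (n_classes q - 1) \<le> v" using k F(5)[of k "n_classes q - 1"] F(1,4)
    by (auto intro: less_imp_le)
  show "\<And>k. k < n_classes q \<Longrightarrow> class_val q k \<in> range (\<lambda>j. q$j)"
    using F(1,3,4) nth_mem by metis
qed

lemma main_pos:
  fixes A :: "real^'m^'l" and B :: "real^'m^'n" and y1 y2 b c :: "real^'m"
  assumes nonempty: "\<exists>y\<in>kerA A. pos_vec y"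
    and cl: "coeff_polytope_closure A = closed_segment y1 y2" and ne: "y1 \<noteq> y2"
    and bD: "b \<in> mon_dep_space B"
    and Dsp: "\<forall>z\<in>mon_dep_space B. \<exists>t. z = t *\<^sub>R b"
    and S: "\<forall>i < n_classes (qvec y1 y2) - 1. (\<Sum>i'\<le>i. lumped (qvec y1 y2) b i') \<ge> 0"
    and ends: "lumped (qvec y1 y2) b 0 * lumped (qvec y1 y2) b (n_classes (qvec y1 y2) - 1) < 0"
    and cpos: "pos_vec c"
  shows "card (Ysol A B c) = 1"
proof -
  define q where "q = qvec y1 y2"
  define w where "w j = y1$j + y2$j" for j
  have y1c: "y1 \<in> coeff_polytope_closure A" and y2c: "y2 \<in> coeff_polytope_closure A"
    using cl by auto
  have nn1: "\<And>j. y1$j \<ge> 0" and nn2: "\<And>j. y2$j \<ge> 0" using y1c y2c by (auto simp: closure_mem)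
  have wpos: "\<And>j. w j > 0"
  proof -
    obtain y0 where y0: "A *v y0 = 0" "\<And>j. y0$j > 0" using nonempty by (auto simp: kerA_def pos_vec_def)
    define \<sigma> where "\<sigma> = (\<Sum>j\<in>UNIV. y0$j)"
    have \<sigma>pos: "\<sigma> > 0" unfolding \<sigma>_def using y0(2) by (simp add: sum_pos)
    define y' where "y' = (1/\<sigma>) *\<^sub>R y0"
    have "y' \<in> coeff_polytope_closure A" unfolding closure_mem y'_def
      using y0 \<sigma>pos by (auto simp: matrix_vector_mult_scaleR \<sigma>_def sum_divide_distrib[symmetric] less_imp_le)
    then obtain u where u: "0\<le>u" "u\<le>1" "y' = (1-u) *\<^sub>R y1 + u *\<^sub>R y2"
      using cl unfolding closed_segment_def by auto
    fix j
    have "y'$j > 0" using y0 \<sigma>pos by (simp add: y'_def)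
    hence gt: "(1-u)*y1$j + u*y2$j > 0" using u by simp
    show "w j > 0"
    proof (rule ccontr)
      assume "\<not> w j > 0" then have "y1$j = 0" "y2$j=0" using nn1[of j] nn2[of j] w_def by auto
      then show False using gt by simp
    qed
  qed
  have qdef: "\<And>j. q$j = (y1$j - y2$j) / w j" by (simp add: q_def qvec_def w_def)
  have qw: "\<And>j. q$j * w j = y1$j - y2$j" using wpos qdef by (simp add: less_imp_neq[symmetric])
  have qb: "\<And>j. \<bar>q$j\<bar> \<le> 1"
  proof -
    fix j
    have "\<bar>y1$j - y2$j\<bar> \<le> w j" using nn1[of j] nn2[of j] by (simp add: w_def abs_le_iff)
    then show "\<bar>q$j\<bar> \<le> 1" using wpos[of j] by (simp add: qdef abs_divide)
  qed
  obtain j2 where j2: "y2$j2 = 0" using endpoint_zero[OF cl ne] by blast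
  obtain j1 where j1: "y1$j1 = 0" using endpoint_zero[of A y2 y1] cl ne closed_segment_commute by metis
  have q1: "q$j2 = 1" using wpos[of j2] by (simp add: qdef j2 w_def)
  have qm1: "q$j1 = -1" using wpos[of j1] by (simp add: qdef j1 w_def)
  define \<omega> where "\<omega> = n_classes q"
  have om2: "\<omega> \<ge> 2"
  proof -
    have "{1, -1} \<subseteq> range (\<lambda>j. q$j)" using q1 qm1 by (metis empty_subsetI insert_subset rangeI)
    then have "card {1::real, -1} \<le> card (range (\<lambda>j. q$j))" by (intro card_mono) auto
    then show ?thesis by (simp add: \<omega>_def n_classes_def)
  qed
  have cv0: "class_val q 0 = 1"
  proof -
    have "1 \<le> class_val q 0" using class_val_ext(1)[of 1 q] q1 by (metis rangeI)
    moreover have "class_val q 0 \<in> range (\<lambda>j. q$j)" using class_val_ext(3)[of 1 q 0] q1 om2 \<omega>_def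
      by (metis rangeI not_numeral_le_zero neq0_conv)
    ultimately show ?thesis using qb by (metis abs_le_iff antisym imageE)
  qed
  have cvl: "class_val q (\<omega>-1) = -1"
  proof -
    have "class_val q (\<omega>-1) \<le> -1" using class_val_ext(2)[of "-1" q] qm1 \<omega>_def by (metis rangeI)
    moreover have "class_val q (\<omega>-1) \<in> range (\<lambda>j. q$j)" using class_val_ext(3)[of 1 q "\<omega>-1"] q1 om2 \<omega>_def
      by (metis rangeI diff_less zero_less_one less_le_trans zero_less_numeral)
    ultimately show ?thesis using qb by (metis abs_le_iff antisym imageE minus_le_iff)
  qed
  define a0 where "a0 = lumped q b 0"
  define aL where "aL = lumped q b (\<omega>-1)"
  have "0 < n_classes (qvec y1 y2) - 1" using om2 by (simp add: q_def \<omega>_def)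
  from S[rule_format, OF this] have "(\<Sum>i'\<le>0. lumped q b i') \<ge> 0" by (simp add: q_def)
  then have "a0 \<ge> 0" by (simp add: a0_def)
  then have a0pos: "a0 > 0" and aLneg: "aL < 0" using ends
    by (auto simp: a0_def aL_def q_def \<omega>_def mult_less_0_iff)
  have a0_eq: "a0 = (\<Sum>j\<in>{j. q$j = 1}. b$j)" by (simp add: a0_def lumped_def eq_class_def cv0)
  have aL_eq: "aL = (\<Sum>j\<in>{j. q$j = -1}. b$j)" unfolding aL_def lumped_def eq_class_def cvl by simp
  have sb: "(\<Sum>j\<in>UNIV. b$j) = 0" using bD by (simp add: mon_dep_space_def)
  define ys where "ys s = ((1+s)/2) *\<^sub>R y1 + ((1-s)/2) *\<^sub>R y2" for s
  have ys_comp: "\<And>s j. ys s $ j = w j / 2 * (1 + s * q$j)"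
  proof -
    fix s j
    have e1: "ys s $ j = w j / 2 + s * (y1$j - y2$j) / 2" by (simp add: ys_def w_def field_simps)
    show "ys s $ j = w j / 2 * (1 + s * q$j)" unfolding e1 qw[symmetric] by (simp add: algebra_simps)
  qed
  have ys_pos: "\<And>s j. \<bar>s\<bar> < 1 \<Longrightarrow> ys s $ j > 0"
    using wpos pos_one qb by (simp add: ys_comp)
  have ys_P: "\<And>s. \<bar>s\<bar> < 1 \<Longrightarrow> ys s \<in> coeff_polytope A"
  proof -
    fix s :: real assume s: "\<bar>s\<bar> < 1"
    have "ys s \<in> closed_segment y1 y2" unfolding closed_segment_def ys_def
      using s by (intro CollectI exI[of _ "(1-s)/2"]) (auto simp: field_simps)
    then have "ys s \<in> coeff_polytope_closure A" using cl by simp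
    then show "ys s \<in> coeff_polytope A" using ys_pos[OF s]
      by (simp add: closure_mem coeff_polytope_def kerA_def pos_vec_def)
  qed
  have P_ys: "\<And>y. y \<in> coeff_polytope A \<Longrightarrow> \<exists>s. \<bar>s\<bar> < 1 \<and> y = ys s"
  proof -
    fix y assume y: "y \<in> coeff_polytope A"
    then have yp: "\<And>j. y$j > 0" by (simp add: coeff_polytope_def pos_vec_def)
    have "y \<in> coeff_polytope_closure A" using y
      by (auto simp: closure_mem coeff_polytope_def kerA_def pos_vec_def less_imp_le)
    then obtain u where u: "0\<le>u" "u\<le>1" "y = (1-u) *\<^sub>R y1 + u *\<^sub>R y2"
      using cl unfolding closed_segment_def by auto
    have "u \<noteq> 0" using yp[of j1] u j1 by auto
    moreover have "u \<noteq> 1" using yp[of j2] u j2 by auto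
    ultimately have "\<bar>1 - 2*u\<bar> < 1" using u by auto
    moreover have "y = ys (1 - 2*u)" using u by (simp add: ys_def)
    ultimately show "\<exists>s. \<bar>s\<bar> < 1 \<and> y = ys s" by blast
  qed
  have vpos: "\<And>y z. pos_vec y \<Longrightarrow> vpow y z > 0"
    unfolding vpow_def pos_vec_def by (intro prod_pos) (simp add: less_imp_neq[symmetric])
  have lnv: "\<And>y z. pos_vec y \<Longrightarrow> ln (vpow y z) = (\<Sum>j\<in>UNIV. z$j * ln (y$j))"
    unfolding vpow_def pos_vec_def by (subst ln_prod) (auto simp: ln_powr less_imp_neq[symmetric])
  have vscale: "\<And>y t. pos_vec y \<Longrightarrow> vpow y (t *\<^sub>R b) = vpow y b powr t"
    by (simp add: vpow_def prod_powr_distrib powr_powr mult.commute)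
  have Ychar: "\<And>y. y \<in> Ysol A B c \<longleftrightarrow> y \<in> coeff_polytope A \<and> ln (vpow y b) = ln (vpow c b)"
  proof
    fix y assume "y \<in> Ysol A B c"
    then show "y \<in> coeff_polytope A \<and> ln (vpow y b) = ln (vpow c b)" using bD by (simp add: Ysol_def)
  next
    fix y assume a: "y \<in> coeff_polytope A \<and> ln (vpow y b) = ln (vpow c b)"
    then have py: "pos_vec y" by (simp add: coeff_polytope_def)
    have e: "vpow y b = vpow c b" using a vpos[OF py] vpos[OF cpos] by simp
    show "y \<in> Ysol A B c" unfolding Ysol_def
    proof (intro CollectI conjI ballI)
      show "y \<in> coeff_polytope A" using a by simp
      fix z assume "z \<in> mon_dep_space B"
      then obtain t where "z = t *\<^sub>R b" using Dsp by blast
      then show "vpow y z = vpow c z" using vscale[OF py] vscale[OF cpos] e by simp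
    qed
  qed
  define G where "G s = (\<Sum>j\<in>UNIV. b$j * ln (1 + s * q$j))" for s
  define T where "T = ln (vpow c b) - (\<Sum>j\<in>UNIV. b$j * ln (w j / 2))"
  have lnys: "\<And>s. \<bar>s\<bar> < 1 \<Longrightarrow> ln (vpow (ys s) b) = (\<Sum>j\<in>UNIV. b$j * ln (w j / 2)) + G s"
  proof -
    fix s :: real assume s: "\<bar>s\<bar> < 1"
    have py: "pos_vec (ys s)" using ys_pos[OF s] by (simp add: pos_vec_def)
    have "ln (vpow (ys s) b) = (\<Sum>j\<in>UNIV. b$j * ln (w j / 2 * (1 + s * q$j)))"
      using lnv[OF py] by (simp add: ys_comp)
    also have "\<dots> = (\<Sum>j\<in>UNIV. b$j * ln (w j / 2) + b$j * ln (1 + s * q$j))"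
    proof (intro sum.cong refl)
      fix j
      have "ln (w j / 2 * (1 + s * q$j)) = ln (w j / 2) + ln (1 + s * q$j)"
        using wpos[of j] pos_one[OF s qb[of j]] by (subst ln_mult) auto
      then show "b$j * ln (w j / 2 * (1 + s * q$j)) = b$j * ln (w j / 2) + b$j * ln (1 + s * q$j)"
        by (simp add: distrib_left)
    qed
    finally show "ln (vpow (ys s) b) = (\<Sum>j\<in>UNIV. b$j * ln (w j / 2)) + G s"
      by (simp add: G_def sum.distrib)
  qed
  have ysY: "\<And>s. \<bar>s\<bar> < 1 \<Longrightarrow> ys s \<in> Ysol A B c \<longleftrightarrow> G s = T"
    using Ychar ys_P lnys by (auto simp: T_def)
  have mono: "\<And>s s'. -1 < s \<Longrightarrow> s < s' \<Longrightarrow> s' < 1 \<Longrightarrow> G s < G s'"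
  proof -
    fix s s' :: real assume ss: "-1 < s" "s < s'" "s' < 1"
    have "G s' - G s = (\<Sum>j\<in>UNIV. b$j * (\<lambda>v. ln (1 + s' * v) - ln (1 + s * v)) (q$j))"
      by (simp add: G_def sum_subtractf[symmetric] right_diff_distrib)
    also have "\<dots> > 0"
    proof (rule abel_core)
      show "\<forall>i<n_classes q - 1. 0 \<le> (\<Sum>i'\<le>i. lumped q b i')" using S by (simp add: q_def)
      show "0 < lumped q b 0" using a0pos a0_def by simp
      show "(\<Sum>j\<in>UNIV. b $ j) = 0" by (rule sb)
      show "2 \<le> n_classes q" using om2 \<omega>_def by simp
      fix u v assume "u \<in> range (($) q)" "v \<in> range (($) q)" "u < v"
      then show "ln (1 + s' * u) - ln (1 + s * u) < ln (1 + s' * v) - ln (1 + s * v)"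
        using phi_mono[OF ss] qb by auto
    qed
    finally show "G s < G s'" by simp
  qed
  have cont: "\<And>s1 s2. -1 < s1 \<Longrightarrow> s2 < 1 \<Longrightarrow> continuous_on {s1..s2} G"
  proof -
    fix s1 s2 :: real assume s: "-1 < s1" "s2 < 1"
    have "\<And>x j. x \<in> {s1..s2} \<Longrightarrow> 1 + x * q$j \<noteq> 0"
    proof -
      fix x j assume "x \<in> {s1..s2}"
      then have "\<bar>x\<bar> < 1" using s by auto
      then show "1 + x * q$j \<noteq> 0" using pos_one qb by (metis less_irrefl)
    qed
    then show "continuous_on {s1..s2} G" unfolding G_def
      by (intro continuous_intros) auto
  qed
  have split1: "\<And>s. G s = aL * ln (1 - s) + (\<Sum>j\<in>{j. q$j \<noteq> -1}. b$j * ln (1 + s * q$j))"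
  proof -
    fix s
    have "G s = (\<Sum>j\<in>UNIV \<inter> {j. q$j = -1}. b$j * ln (1 + s * q$j)) + (\<Sum>j\<in>UNIV - {j. q$j = -1}. b$j * ln (1 + s * q$j))"
      unfolding G_def by (rule sum.Int_Diff) simp
    also have "(\<Sum>j\<in>UNIV \<inter> {j. q$j = -1}. b$j * ln (1 + s * q$j)) = (\<Sum>j\<in>{j. q$j = -1}. b$j * ln (1 - s))"
      by (intro sum.cong) auto
    also have "\<dots> = aL * ln (1 - s)" by (simp add: aL_eq sum_distrib_right)
    also have "UNIV - {j. q$j = -1} = {j. q$j \<noteq> -1}" by auto
    finally show "G s = aL * ln (1 - s) + (\<Sum>j\<in>{j. q$j \<noteq> -1}. b$j * ln (1 + s * q$j))" .
  qed
  have split0: "\<And>s. G s = a0 * ln (1 + s) + (\<Sum>j\<in>{j. q$j \<noteq> 1}. b$j * ln (1 + s * q$j))"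
  proof -
    fix s
    have "G s = (\<Sum>j\<in>UNIV \<inter> {j. q$j = 1}. b$j * ln (1 + s * q$j)) + (\<Sum>j\<in>UNIV - {j. q$j = 1}. b$j * ln (1 + s * q$j))"
      unfolding G_def by (rule sum.Int_Diff) simp
    also have "(\<Sum>j\<in>UNIV \<inter> {j. q$j = 1}. b$j * ln (1 + s * q$j)) = (\<Sum>j\<in>{j. q$j = 1}. b$j * ln (1 + s))"
      by (intro sum.cong) auto
    also have "\<dots> = a0 * ln (1 + s)" by (simp add: a0_eq sum_distrib_right)
    also have "UNIV - {j. q$j = 1} = {j. q$j \<noteq> 1}" by auto
    finally show "G s = a0 * ln (1 + s) + (\<Sum>j\<in>{j. q$j \<noteq> 1}. b$j * ln (1 + s * q$j))" .
  qed
  have lim1: "filterlim G at_top (at_left 1)"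
  proof -
    have h: "((\<lambda>s. \<Sum>j\<in>{j. q$j \<noteq> -1}. b$j * ln (1 + s * q$j)) \<longlongrightarrow>
              (\<Sum>j\<in>{j. q$j \<noteq> -1}. b$j * ln (1 + 1 * q$j))) (at_left 1)"
    proof (intro tendsto_intros)
      fix j assume "j \<in> {j. q$j \<noteq> -1}"
      then have "q$j > -1" using qb[of j] by auto
      then show "1 + 1 * q$j \<noteq> 0" by simp
    qed
    have "filterlim (\<lambda>s::real. ln (1 - s)) at_bot (at_left 1)" by real_asymp
    then have "filterlim (\<lambda>s. aL * ln (1 - s)) at_top (at_left 1)"
      using filterlim_tendsto_neg_mult_at_top_iff[OF tendsto_const[of aL "at_left (1::real)"] aLneg] by simp
    then have "filterlim (\<lambda>s. (\<Sum>j\<in>{j. q$j \<noteq> -1}. b$j * ln (1 + s * q$j)) + aL * ln (1 - s)) at_top (at_left 1)"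
      by (rule filterlim_tendsto_add_at_top[OF h])
    then show ?thesis by (subst ext[OF split1]) (simp add: add.commute)
  qed
  have lim0: "filterlim G at_bot (at_right (-1))"
  proof -
    have h: "((\<lambda>s. \<Sum>j\<in>{j. q$j \<noteq> 1}. b$j * ln (1 + s * q$j)) \<longlongrightarrow>
              (\<Sum>j\<in>{j. q$j \<noteq> 1}. b$j * ln (1 + (-1) * q$j))) (at_right (-1))"
    proof (intro tendsto_intros)
      fix j assume "j \<in> {j. q$j \<noteq> 1}"
      then have "q$j < 1" using qb[of j] by auto
      then show "1 + (-1) * q$j \<noteq> 0" by simp
    qed
    have "filterlim (\<lambda>s::real. ln (1 + s)) at_bot (at_right (-1))" by real_asymp
    then have "filterlim (\<lambda>s. a0 * ln (1 + s)) at_bot (at_right (-1))"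
      using filterlim_tendsto_pos_mult_at_bot_iff[OF tendsto_const[of a0 "at_right (-1::real)"] a0pos] by simp
    then have "filterlim (\<lambda>s. (\<Sum>j\<in>{j. q$j \<noteq> 1}. b$j * ln (1 + s * q$j)) + a0 * ln (1 + s)) at_bot (at_right (-1))"
      using filterlim_tendsto_add_at_bot_iff[OF h] by simp
    then show ?thesis by (subst ext[OF split0]) (simp add: add.commute)
  qed
  have "\<forall>\<^sub>F s in at_left 1. T \<le> G s \<and> s \<in> {0<..<1}"
    using lim1 eventually_at_left_real[of 0 1] by (auto simp: filterlim_at_top intro: eventually_conj)
  then obtain s2 where s2: "T \<le> G s2" "0 < s2" "s2 < 1"
    using eventually_happens'[of "at_left (1::real)"] by auto
  have "\<forall>\<^sub>F s in at_right (-1). G s \<le> T \<and> s \<in> {-1<..<0}"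
    using lim0 eventually_at_right_real[of "-1" 0] by (auto simp: filterlim_at_bot intro: eventually_conj)
  then obtain s1 where s1: "G s1 \<le> T" "-1 < s1" "s1 < 0"
    using eventually_happens'[of "at_right (-1::real)"] by auto
  obtain s0 where s0: "s1 \<le> s0" "s0 \<le> s2" "G s0 = T"
    using IVT'[of G s1 T s2] s1 s2 cont[OF s1(2) s2(3)] by auto
  have s0a: "\<bar>s0\<bar> < 1" using s0 s1 s2 by auto
  have "Ysol A B c = {ys s0}"
  proof
    show "{ys s0} \<subseteq> Ysol A B c" using ysY[OF s0a] s0 by simp
    show "Ysol A B c \<subseteq> {ys s0}"
    proof
      fix y assume yY: "y \<in> Ysol A B c"
      then have "y \<in> coeff_polytope A" by (simp add: Ysol_def)
      then obtain s where s: "\<bar>s\<bar> < 1" "y = ys s" using P_ys by blast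
      then have "G s = T" using ysY yY by simp
      have "s = s0"
      proof (rule ccontr)
        assume "s \<noteq> s0"
        then have "s < s0 \<or> s0 < s" by auto
        then show False using mono[of s s0] mono[of s0 s] s s0a \<open>G s = T\<close> s0(3) by (auto simp: abs_less_iff)
      qed
      then show "y \<in> {ys s0}" using s by simp
    qed
  qed
  then show ?thesis by simp
qed


lemma lumped_neg: "lumped q (-b) i = - lumped q b i"
  by (simp add: lumped_def sum_negf)

theorem theorem2:
  fixes A :: "real^'m^'l" and B :: "real^'m^'n"
    and y1 y2 b :: "real^'m"
  assumes nonempty: "\<exists>y\<in>kerA A. pos_vec y"
    and dimP: "aff_dim (coeff_polytope A) = 1"
    and endpoints: "coeff_polytope_closure A = closed_segment y1 y2" "y1 \<noteq> y2"
    and d1: "dim (mon_dep_space B) = 1"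
    and bspan: "span {b} = mon_dep_space B"
    and sign: "(\<forall>i < n_classes (qvec y1 y2) - 1.
                  (\<Sum>i'\<le>i. lumped (qvec y1 y2) b i') \<ge> 0)
             \<or> (\<forall>i < n_classes (qvec y1 y2) - 1.
                  (\<Sum>i'\<le>i. lumped (qvec y1 y2) b i') \<le> 0)"
    and ends: "lumped (qvec y1 y2) b 0 * lumped (qvec y1 y2) b (n_classes (qvec y1 y2) - 1) < 0"
  shows "\<forall>c. pos_vec c \<longrightarrow> card (Ysol A B c) = 1"
proof (intro allI impI)
  fix c :: "real^'m" assume cpos: "pos_vec c"
  have bD: "b \<in> mon_dep_space B" using bspan span_base[of b "{b}"] by simp
  have Dsp: "\<forall>z\<in>mon_dep_space B. \<exists>t. z = t *\<^sub>R b" using bspan span_singleton[of b] by auto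
  have bD': "-b \<in> mon_dep_space B" using bspan span_neg[of b "{b}"] span_base[of b "{b}"] by simp
  have Dsp': "\<forall>z\<in>mon_dep_space B. \<exists>t. z = t *\<^sub>R (-b)"
  proof
    fix z assume "z \<in> mon_dep_space B"
    then obtain t where "z = t *\<^sub>R b" using Dsp by blast
    then have "z = (-t) *\<^sub>R (-b)" by simp
    then show "\<exists>t. z = t *\<^sub>R (-b)" by blast
  qed
  from sign show "card (Ysol A B c) = 1"
  proof
    assume S: "\<forall>i < n_classes (qvec y1 y2) - 1. (\<Sum>i'\<le>i. lumped (qvec y1 y2) b i') \<ge> 0"
    show ?thesis by (rule main_pos[OF nonempty endpoints(1,2) bD Dsp S ends cpos])
  next
    assume S: "\<forall>i < n_classes (qvec y1 y2) - 1. (\<Sum>i'\<le>i. lumped (qvec y1 y2) b i') \<le> 0"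
    have S': "\<forall>i < n_classes (qvec y1 y2) - 1. (\<Sum>i'\<le>i. lumped (qvec y1 y2) (-b) i') \<ge> 0"
      using S by (simp add: lumped_neg sum_negf)
    have ends': "lumped (qvec y1 y2) (-b) 0 * lumped (qvec y1 y2) (-b) (n_classes (qvec y1 y2) - 1) < 0"
      using ends by (simp add: lumped_neg)
    show ?thesis by (rule main_pos[OF nonempty endpoints(1,2) bD' Dsp' S' ends' cpos])
  qed
qed

end
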